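(* Let $\mathcal F:\mathbb R^d\to\mathbb R$ satisfy: (A1) $\inf\mathcal F>-\infty$; (A2) there exist $L_{\mathcal F},c_u,c_l,R_l>0$ with $|\mathcal F(x)-\mathcal F(y)|\le L_{\mathcal F}(1+|x|+|y|)|x-y|$ for all $x,y$, $\mathcal F(x)-\mathcal F(x^* )\le c_u(1+|x|^2)$ for all $x$, and $\mathcal F(x)-\mathcal F(x^* )\ge c_l|x|^2$ for all $|x|>R_l$, where $x^*$ is a global minimizer of $\mathcal F$. Let $\alpha>0$, $K>0$ and $\mu,\hat\mu\in\mathcal P(\mathbb R^d)$ with $\int|x|^4\mu(dx)\le K$ and $\int|x|^4\hat\mu(dx)\le K$. Then $$|X^\alpha[\mu]-X^\alpha[\hat\mu]|\le C_0\,\mathcal W_1(\mu,\hat\mu),$$ where $C_0>0$ depends only on $\alpha,L_{\mathcal F},K$.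
   Context: $X^\alpha[\rho]=\int x\,\omega_\alpha(x)\rho(dx)/\int\omega_\alpha(x)\rho(dx)$ with $\omega_\alpha(x)=\exp(-\alpha\mathcal F(x))$; $\mathcal W_1$ is the $1$-Wasserstein distance with respect to the Euclidean metric. *)

theory Defs
  imports "HOL-Probability.Probability"
begin

definition prob_measures :: "'a::euclidean_space measure set" where
  "prob_measures = {\<mu>. prob_space \<mu> \<and> sets \<mu> = sets borel}"

definition couplings :: "'a::euclidean_space measure \<Rightarrow> 'a measure \<Rightarrow> ('a \<times> 'a) measure set" where
  "couplings \<mu> \<nu> = {\<pi>. prob_space \<pi> \<and> sets \<pi> = sets (borel \<Otimes>\<^sub>M borel)
                       \<and> distr \<pi> borel fst = \<mu> \<and> distr \<pi> borel snd = \<nu>}"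

definition W1 :: "'a::euclidean_space measure \<Rightarrow> 'a measure \<Rightarrow> ennreal" where
  "W1 \<mu> \<nu> = (INF \<pi>\<in>couplings \<mu> \<nu>. \<integral>\<^sup>+ z. ennreal (dist (fst z) (snd z)) \<partial>\<pi>)"

definition weight :: "real \<Rightarrow> ('a \<Rightarrow> real) \<Rightarrow> 'a \<Rightarrow> real" where
  "weight \<alpha> F x = exp (- \<alpha> * F x)"

definition consensus_point :: "real \<Rightarrow> ('a::euclidean_space \<Rightarrow> real) \<Rightarrow> 'a measure \<Rightarrow> 'a" where
  "consensus_point \<alpha> F \<rho> =
     (\<integral>x. weight \<alpha> F x *\<^sub>R x \<partial>\<rho>) /\<^sub>R (\<integral>x. weight \<alpha> F x \<partial>\<rho>)"

end

theory Submission
  imports Defs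
begin


lemma lip_meas:
  fixes f :: "'a::euclidean_space \<Rightarrow> 'b::euclidean_space"
  assumes "\<And>x y. norm (f x - f y) \<le> L * dist x y"
  shows "f \<in> borel_measurable borel"
proof -
  have "continuous_on UNIV f"
    unfolding continuous_on_iff
  proof (intro ballI allI impI)
    fix x and e :: real assume e: "e > 0"
    show "\<exists>d>0. \<forall>x'\<in>UNIV. dist x' x < d \<longrightarrow> dist (f x') (f x) < e"
    proof (intro exI[of _ "e / (\<bar>L\<bar> + 1)"] conjI ballI impI)
      show "e / (\<bar>L\<bar> + 1) > 0" using e by (simp add: add_pos_nonneg)
      fix x' assume d: "dist x' x < e / (\<bar>L\<bar> + 1)"
      have "dist (f x') (f x) \<le> L * dist x' x" using assms by (simp add: dist_norm)
      also have "\<dots> \<le> (\<bar>L\<bar> + 1) * dist x' x" by (intro mult_right_mono) auto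
      also have "\<dots> < e" using d by (simp add: field_simps add_pos_nonneg)
      finally show "dist (f x') (f x) < e" .
    qed
  qed
  then show ?thesis using borel_measurable_continuous_onI by blast
qed

lemma coupling_bound:
  fixes f :: "'a::euclidean_space \<Rightarrow> 'b::euclidean_space" and \<pi> :: "('a \<times> 'a) measure"
  assumes pi: "\<pi> \<in> couplings \<mu> \<nu>"
    and lip: "\<And>x y. norm (f x - f y) \<le> L * dist x y"
    and bd: "\<And>x. norm (f x) \<le> M"
  shows "ennreal (norm (integral\<^sup>L \<mu> f - integral\<^sup>L \<nu> f))
          \<le> ennreal L * (\<integral>\<^sup>+ z. ennreal (dist (fst z) (snd z)) \<partial>\<pi>)"
proof -
  have ps: "prob_space \<pi>" and sets: "sets \<pi> = sets (borel \<Otimes>\<^sub>M borel)"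
    and d1: "distr \<pi> borel fst = \<mu>" and d2: "distr \<pi> borel snd = \<nu>"
    using pi unfolding couplings_def by auto
  interpret prob_space \<pi> by fact
  have fm: "f \<in> borel_measurable borel" using lip by (rule lip_meas)
  have mf: "fst \<in> measurable \<pi> borel" and ms: "snd \<in> measurable \<pi> borel"
    using measurable_cong_sets[OF sets refl] by auto
  have i1: "integral\<^sup>L \<mu> f = (\<integral>z. f (fst z) \<partial>\<pi>)"
    using integral_distr[OF mf fm] d1 by simp
  have i2: "integral\<^sup>L \<nu> f = (\<integral>z. f (snd z) \<partial>\<pi>)"
    using integral_distr[OF ms fm] d2 by simp
  have int1: "integrable \<pi> (\<lambda>z. f (fst z))"
    by (rule integrable_const_bound[where B=M]) (use bd measurable_compose[OF mf fm] in auto)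
  have int2: "integrable \<pi> (\<lambda>z. f (snd z))"
    by (rule integrable_const_bound[where B=M]) (use bd measurable_compose[OF ms fm] in auto)
  have "ennreal (norm (integral\<^sup>L \<mu> f - integral\<^sup>L \<nu> f))
      = ennreal (norm (\<integral>z. f (fst z) - f (snd z) \<partial>\<pi>))"
    using i1 i2 int1 int2 by simp
  also have "\<dots> \<le> (\<integral>\<^sup>+z. norm (f (fst z) - f (snd z)) \<partial>\<pi>)"
    by (rule integral_norm_bound_ennreal) (use int1 int2 in auto)
  also have "\<dots> \<le> (\<integral>\<^sup>+z. ennreal L * ennreal (dist (fst z) (snd z)) \<partial>\<pi>)"
  proof (rule nn_integral_mono)
    fix z :: "'a \<times> 'a"
    have "L * dist (fst z) (snd z) \<ge> 0" using lip[of "fst z" "snd z"] norm_ge_zero order_trans by blast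
    then show "ennreal (norm (f (fst z) - f (snd z))) \<le> ennreal L * ennreal (dist (fst z) (snd z))"
      using lip[of "fst z" "snd z"]
      by (metis zero_le_dist ennreal_leI ennreal_mult'')
  qed
  also have "\<dots> = ennreal L * (\<integral>\<^sup>+ z. ennreal (dist (fst z) (snd z)) \<partial>\<pi>)"
    by (rule nn_integral_cmult) (use sets in \<open>simp add: measurable_cong_sets[OF sets refl]\<close>)
  finally show ?thesis .
qed




lemma expdiff:
  fixes a b :: real
  shows "\<bar>exp (-a) - exp (-b)\<bar> \<le> max (exp (-a)) (exp (-b)) * \<bar>a - b\<bar>"
proof -
  have key: "exp (-a) - exp (-b) \<le> exp (-a) * (b - a)" if "a \<le> b" for a b :: real
  proof -
    have "exp (-(b - a)) \<ge> 1 - (b - a)" using exp_ge_add_one_self[of "-(b-a)"] by (simp add: algebra_simps)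
    then have "exp (-a) * exp (-(b - a)) \<ge> exp (-a) * (1 - (b - a))"
      by (intro mult_left_mono) auto
    moreover have "exp (-a) * exp (-(b - a)) = exp (-b)" by (simp add: exp_add[symmetric])
    ultimately show ?thesis by (simp add: algebra_simps)
  qed
  show ?thesis
  proof (cases "a \<le> b")
    case True
    then have "exp (-b) \<le> exp (-a)" by simp
    then show ?thesis using key[OF True] True by (simp add: abs_if max_def)
  next
    case False
    then have "exp (-a) \<le> exp (-b)" by simp
    then show ?thesis using key[of b a] False by (simp add: abs_if max_def algebra_simps)
  qed
qed

lemma weight_bounds:
  fixes F :: "'a::euclidean_space \<Rightarrow> real"
  assumes xs_min: "\<forall>y. F xs \<le> F y"
    and pos: "LF > 0" "cl > 0" "Rl > 0"
    and lip: "\<forall>x y. \<bar>F x - F y\<bar> \<le> LF * (1 + norm x + norm y) * norm (x - y)"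
    and low: "\<forall>x. norm x > Rl \<longrightarrow> F x - F xs \<ge> cl * (norm x)\<^sup>2"
    and \<alpha>pos: "\<alpha> > 0"
  defines "E \<equiv> exp (- \<alpha> * F xs)"
  defines "B \<equiv> E * ((1 + Rl)\<^sup>2 + 2 + 2 / (\<alpha> * cl))"
  defines "L \<equiv> E + 2 * \<alpha> * LF * B + 2 * B"
  shows "\<And>x. 0 < exp (- \<alpha> * F x) \<and> exp (- \<alpha> * F x) \<le> E"
    and "\<And>x. exp (- \<alpha> * F x) * (1 + norm x)\<^sup>2 \<le> B"
    and "\<And>x y. \<bar>exp (- \<alpha> * F x) - exp (- \<alpha> * F y)\<bar> \<le> L * dist x y"
    and "\<And>x y. norm (exp (- \<alpha> * F x) *\<^sub>R x - exp (- \<alpha> * F y) *\<^sub>R y) \<le> L * dist x y"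
    and "0 < E" "0 < B" "0 < L"
proof -
  define w where "w x = exp (- \<alpha> * F x)" for x
  have Epos: "0 < E" unfolding E_def by simp
  have wle: "w x \<le> E" for x unfolding w_def E_def using xs_min \<alpha>pos by simp
  have wpos: "0 < w x" for x unfolding w_def by simp
  show "\<And>x. 0 < exp (- \<alpha> * F x) \<and> exp (- \<alpha> * F x) \<le> E" using wle wpos unfolding w_def by auto
  have ac: "\<alpha> * cl > 0" using pos \<alpha>pos by simp
  have Bpos: "0 < B" unfolding B_def using Epos ac by (intro mult_pos_pos add_nonneg_pos) auto
  show "0 < E" "0 < B" by fact+
  show Lpos: "0 < L" unfolding L_def using Epos Bpos pos \<alpha>pos by (intro add_pos_nonneg) auto
  have wB: "w x * (1 + norm x)\<^sup>2 \<le> B" for x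
  proof (cases "norm x > Rl")
    case False
    have "(1 + norm x)\<^sup>2 \<le> (1 + Rl)\<^sup>2" using False by (intro power_mono) auto
    then have "w x * (1 + norm x)\<^sup>2 \<le> E * (1 + Rl)\<^sup>2"
      using wle wpos Epos by (intro mult_mono) auto
    also have "\<dots> \<le> B" unfolding B_def using Epos ac by (intro mult_left_mono) auto
    finally show ?thesis .
  next
    case True
    define s where "s = norm x"
    have s0: "s \<ge> 0" unfolding s_def by simp
    have "F x - F xs \<ge> cl * s\<^sup>2" using low True unfolding s_def by auto
    then have "\<alpha> * (F x - F xs) \<ge> \<alpha> * cl * s\<^sup>2" using \<alpha>pos by (metis mult.assoc mult_left_mono less_imp_le)
    then have "w x \<le> E * exp (- (\<alpha> * cl * s\<^sup>2))"
      unfolding w_def E_def by (simp add: exp_add[symmetric] algebra_simps)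
    moreover have "exp (\<alpha> * cl * s\<^sup>2) \<ge> 1 + \<alpha> * cl * s\<^sup>2" by (rule exp_ge_add_one_self)
    ultimately have "w x * (1 + \<alpha> * cl * s\<^sup>2) \<le> E"
    proof -
      assume a: "w x \<le> E * exp (- (\<alpha> * cl * s\<^sup>2))" and b: "exp (\<alpha> * cl * s\<^sup>2) \<ge> 1 + \<alpha> * cl * s\<^sup>2"
      have "w x * (1 + \<alpha> * cl * s\<^sup>2) \<le> E * exp (- (\<alpha> * cl * s\<^sup>2)) * exp (\<alpha> * cl * s\<^sup>2)"
        using a b wpos ac Epos by (intro mult_mono) auto
      also have "\<dots> = E" by (simp add: exp_minus field_simps)
      finally show ?thesis .
    qed
    moreover have "(1 + s)\<^sup>2 \<le> (2 + 2 / (\<alpha> * cl)) * (1 + \<alpha> * cl * s\<^sup>2)"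
    proof -
      have "(1 + s)\<^sup>2 \<le> 2 + 2 * s\<^sup>2" 
      proof -
        have "0 \<le> (1 - s)\<^sup>2" by simp
        then show ?thesis by (simp add: power2_eq_square algebra_simps)
      qed
      also have "\<dots> \<le> (2 + 2 / (\<alpha> * cl)) * (1 + \<alpha> * cl * s\<^sup>2)"
      proof -
        define t where "t = \<alpha> * cl"
        have t0: "t > 0" using ac t_def by simp
        have "(2 + 2 / t) * (1 + t * s\<^sup>2) = 2 + 2 * t * s\<^sup>2 + 2 / t + 2 * s\<^sup>2"
          using t0 by (simp add: field_simps)
        moreover have "0 \<le> 2 * t * s\<^sup>2 + 2 / t" using t0 by simp
        ultimately show ?thesis unfolding t_def[symmetric] by linarith
      qed
      finally show ?thesis .
    qed
    ultimately have "w x * (1 + s)\<^sup>2 \<le> w x * ((2 + 2 / (\<alpha> * cl)) * (1 + \<alpha> * cl * s\<^sup>2))"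
      using wpos[of x] by (intro mult_left_mono) auto
    also have "\<dots> = (w x * (1 + \<alpha> * cl * s\<^sup>2)) * (2 + 2 / (\<alpha> * cl))" by simp
    also have "\<dots> \<le> E * (2 + 2 / (\<alpha> * cl))"
      using \<open>w x * (1 + \<alpha> * cl * s\<^sup>2) \<le> E\<close> ac by (intro mult_right_mono) auto
    also have "\<dots> \<le> B" unfolding B_def using Epos by (intro mult_left_mono) auto
    finally show ?thesis unfolding s_def .
  qed
  show "\<And>x. exp (- \<alpha> * F x) * (1 + norm x)\<^sup>2 \<le> B" using wB unfolding w_def .
  have wB1: "w x * (1 + norm x) \<le> B" for x
  proof -
    have "w x * (1 + norm x) \<le> w x * (1 + norm x)\<^sup>2"
    proof (intro mult_left_mono)
      have "1 * (1 + norm x) \<le> (1 + norm x) * (1 + norm x)" by (intro mult_right_mono) auto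
      then show "1 + norm x \<le> (1 + norm x)\<^sup>2" by (simp add: power2_eq_square)
    qed (use wpos[of x] in auto)
    then show ?thesis using wB[of x] by linarith
  qed
  have wdiff: "\<bar>w x - w y\<bar> \<le> max (w x) (w y) * \<alpha> * LF * (1 + norm x + norm y) * norm (x - y)" for x y
  proof -
    have "\<bar>w x - w y\<bar> \<le> max (w x) (w y) * \<bar>\<alpha> * F x - \<alpha> * F y\<bar>"
      using expdiff[of "\<alpha> * F x" "\<alpha> * F y"] unfolding w_def by simp
    also have "\<bar>\<alpha> * F x - \<alpha> * F y\<bar> = \<alpha> * \<bar>F x - F y\<bar>" using \<alpha>pos
      by (simp add: abs_mult right_diff_distrib[symmetric])
    also have "max (w x) (w y) * (\<alpha> * \<bar>F x - F y\<bar>) \<le> max (w x) (w y) * (\<alpha> * (LF * (1 + norm x + norm y) * norm (x - y)))"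
      using lip \<alpha>pos wpos[of x] by (intro mult_left_mono) (auto simp: max_def)
    finally show ?thesis by (simp add: mult_ac)
  qed
  have ub: "\<exists>u. max (w x) (w y) * u \<le> B \<and> max (w x) (w y) * u\<^sup>2 \<le> B \<and> 1 + norm x + norm y \<le> 2 * u \<and> norm y \<le> u \<and> norm x \<le> u"
    if "dist x y < 1" for x y
  proof -
    have ny: "norm y \<le> norm x + 1" and nx: "norm x \<le> norm y + 1" using that norm_triangle_ineq2[of x y] norm_triangle_ineq2[of y x]
      by (auto simp: dist_norm norm_minus_commute)
    show ?thesis
    proof (cases "w x \<ge> w y")
      case True
      then show ?thesis using ny wB[of x] wB1[of x] by (intro exI[of _ "1 + norm x"]) (auto simp: max_def)
    next
      case False
      then show ?thesis using nx wB[of y] wB1[of y] by (intro exI[of _ "1 + norm y"]) (auto simp: max_def)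
    qed
  qed
  have mpos: "0 \<le> max (w x) (w y)" for x y using wpos[of x] by (simp add: max_def)
  have aL: "0 \<le> \<alpha> * LF" using \<alpha>pos pos by simp
  have lipw: "\<bar>w x - w y\<bar> \<le> L * dist x y" for x y
  proof (cases "dist x y < 1")
    case False
    have "\<bar>w x - w y\<bar> \<le> E" using wle[of x] wle[of y] wpos[of x] wpos[of y] by linarith
    also have "\<dots> \<le> E * dist x y" using False Epos by simp
    also have "\<dots> \<le> L * dist x y" unfolding L_def using Bpos pos \<alpha>pos by (intro mult_right_mono) auto
    finally show ?thesis .
  next
    case True
    then obtain u where u: "max (w x) (w y) * u \<le> B" "1 + norm x + norm y \<le> 2 * u" using ub by blast
    have "\<bar>w x - w y\<bar> \<le> (\<alpha> * LF) * (max (w x) (w y) * (1 + norm x + norm y)) * dist x y"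
      using wdiff[of x y] by (simp add: dist_norm mult_ac)
    also have "\<dots> \<le> (\<alpha> * LF) * (2 * B) * dist x y"
    proof -
      have "max (w x) (w y) * (1 + norm x + norm y) \<le> max (w x) (w y) * (2 * u)"
        using u mpos by (intro mult_left_mono) auto
      then have "max (w x) (w y) * (1 + norm x + norm y) \<le> 2 * B" using u by linarith
      then show ?thesis using aL by (intro mult_right_mono mult_left_mono) auto
    qed
    also have "\<dots> \<le> L * dist x y" unfolding L_def using Bpos Epos by (intro mult_right_mono) auto
    finally show ?thesis .
  qed
  show "\<And>x y. \<bar>exp (- \<alpha> * F x) - exp (- \<alpha> * F y)\<bar> \<le> L * dist x y" using lipw unfolding w_def .
  have wn: "w x * norm x \<le> B" for x using wB1[of x] wpos[of x] by (smt (verit) mult_left_mono norm_ge_zero)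
  have "norm (w x *\<^sub>R x - w y *\<^sub>R y) \<le> L * dist x y" for x y
  proof -
    have eq: "w x *\<^sub>R x - w y *\<^sub>R y = (w x - w y) *\<^sub>R y + w x *\<^sub>R (x - y)" by (simp add: algebra_simps)
    show ?thesis
    proof (cases "dist x y < 1")
      case False
      have "norm (w x *\<^sub>R x - w y *\<^sub>R y) \<le> w x * norm x + w y * norm y"
        using norm_triangle_ineq4[of "w x *\<^sub>R x" "w y *\<^sub>R y"] wpos[of x] wpos[of y] by simp
      also have "\<dots> \<le> 2 * B" using wn[of x] wn[of y] by linarith
      also have "\<dots> \<le> 2 * B * dist x y" using False Bpos by simp
      also have "\<dots> \<le> L * dist x y" unfolding L_def using Bpos Epos pos \<alpha>pos by (intro mult_right_mono) auto
      finally show ?thesis .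
    next
      case True
      then obtain u where u: "max (w x) (w y) * u\<^sup>2 \<le> B" "1 + norm x + norm y \<le> 2 * u" "norm y \<le> u" using ub by blast
      have u0: "0 \<le> u" using u(3) norm_ge_zero order_trans by blast
      have "norm (w x *\<^sub>R x - w y *\<^sub>R y) \<le> \<bar>w x - w y\<bar> * norm y + w x * norm (x - y)"
        unfolding eq using norm_triangle_ineq[of "(w x - w y) *\<^sub>R y" "w x *\<^sub>R (x - y)"] wpos[of x] by simp
      also have "\<bar>w x - w y\<bar> * norm y \<le> (\<alpha> * LF) * (max (w x) (w y) * (1 + norm x + norm y) * norm y) * dist x y"
        using mult_right_mono[OF wdiff[of x y], of "norm y"] by (simp add: dist_norm mult_ac)
      also have "\<dots> \<le> (\<alpha> * LF) * (2 * B) * dist x y"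
      proof -
        have "max (w x) (w y) * (1 + norm x + norm y) * norm y \<le> max (w x) (w y) * (2 * u) * u"
          using u mpos u0 by (intro mult_mono mult_left_mono) auto
        also have "\<dots> = 2 * (max (w x) (w y) * u\<^sup>2)" by (simp add: power2_eq_square)
        finally have "max (w x) (w y) * (1 + norm x + norm y) * norm y \<le> 2 * B" using u by linarith
        then show ?thesis using aL by (intro mult_right_mono mult_left_mono) auto
      qed
      also have "w x * norm (x - y) \<le> E * dist x y" using wle[of x] by (simp add: dist_norm mult_right_mono)
      moreover have "0 \<le> B * (2 * dist x y)" using Bpos by simp
      ultimately show ?thesis unfolding L_def
        by (simp add: algebra_simps)
    qed
  qed
  then show "\<And>x y. norm (exp (- \<alpha> * F x) *\<^sub>R x - exp (- \<alpha> * F y) *\<^sub>R y) \<le> L * dist x y" unfolding w_def .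
qed




lemma quot_bound:
  fixes N N' :: "'a::real_normed_vector"
  assumes z: "Z \<ge> z0" "Z' \<ge> z0" "z0 > 0" and nb: "norm N' \<le> B"
    and d1: "norm (N - N') \<le> L * d" and d2: "\<bar>Z - Z'\<bar> \<le> L * d"
  shows "norm (N /\<^sub>R Z - N' /\<^sub>R Z') \<le> (L / z0 + L * B / z0\<^sup>2) * d"
proof -
  have Z0: "Z > 0" "Z' > 0" using z by auto
  have Ld: "0 \<le> L * d" using d2 by linarith
  have sc: "inverse Z = inverse Z' + (Z' - Z) / (Z * Z')" using Z0 by (simp add: field_simps)
  have s: "inverse Z *\<^sub>R N' = inverse Z' *\<^sub>R N' + ((Z' - Z) / (Z * Z')) *\<^sub>R N'"
    by (metis sc scaleR_add_left)
  have eq: "N /\<^sub>R Z - N' /\<^sub>R Z' = (1 / Z) *\<^sub>R (N - N') + ((Z' - Z) / (Z * Z')) *\<^sub>R N'"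
    using s by (simp add: scaleR_diff_right algebra_simps divide_inverse)
  have t1: "norm ((1 / Z) *\<^sub>R (N - N')) \<le> L * d / z0"
  proof -
    have "norm ((1 / Z) *\<^sub>R (N - N')) = norm (N - N') / Z" using Z0 by simp
    also have "\<dots> \<le> L * d / Z" using d1 Z0 by (simp add: divide_right_mono)
    also have "\<dots> \<le> L * d / z0" using Ld z by (intro divide_left_mono) auto
    finally show ?thesis .
  qed
  have t2: "norm (((Z' - Z) / (Z * Z')) *\<^sub>R N') \<le> L * B / z0\<^sup>2 * d"
  proof -
    have "norm (((Z' - Z) / (Z * Z')) *\<^sub>R N') = \<bar>Z - Z'\<bar> * norm N' / (Z * Z')"
      using Z0 by (simp add: abs_minus_commute)
    also have "\<dots> \<le> (L * d) * B / (Z * Z')"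
      using d2 nb Z0 Ld by (intro divide_right_mono mult_mono) auto
    also have "\<dots> \<le> (L * d) * B / (z0 * z0)"
    proof (intro divide_left_mono)
      show "0 \<le> L * d * B" using Ld nb norm_ge_zero[of N'] by (meson mult_nonneg_nonneg order_trans)
      show "z0 * z0 \<le> Z * Z'" using z by (intro mult_mono) auto
      show "0 < Z * Z' * (z0 * z0)" using z Z0 by simp
    qed
    also have "\<dots> = L * B / z0\<^sup>2 * d" by (simp add: power2_eq_square)
    finally show ?thesis .
  qed
  have "norm (N /\<^sub>R Z - N' /\<^sub>R Z') \<le> L * d / z0 + L * B / z0\<^sup>2 * d"
    unfolding eq using norm_triangle_le[OF add_mono[OF t1 t2]] .
  then show ?thesis by (simp add: algebra_simps)
qed

lemma denom_lower:
  fixes F :: "'a::euclidean_space \<Rightarrow> real" and \<mu> :: "'a measure"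
  assumes mu: "\<mu> \<in> prob_measures"
    and mom: "(\<integral>\<^sup>+ x. ennreal (norm x ^ 4) \<partial>\<mu>) \<le> ennreal K"
    and Kpos: "K > 0" and \<alpha>pos: "\<alpha> > 0" and cu: "cu > 0"
    and up: "\<forall>x. F x - F xs \<le> cu * (1 + (norm x)\<^sup>2)"
    and wm: "(\<lambda>x. exp (- \<alpha> * F x)) \<in> borel_measurable borel"
    and wb: "\<And>x. exp (- \<alpha> * F x) \<le> E"
  shows "(\<integral>x. exp (- \<alpha> * F x) \<partial>\<mu>) \<ge> exp (- \<alpha> * F xs) * exp (- \<alpha> * cu * (1 + sqrt (2 * K))) / 2"
proof -
  have ps: "prob_space \<mu>" and sets: "sets \<mu> = sets borel" using mu unfolding prob_measures_def by auto
  interpret prob_space \<mu> by fact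
  have meq: "borel_measurable \<mu> = borel_measurable borel" using measurable_cong_sets[OF sets refl] .
  define lam where "lam = sqrt (2 * K)"
  have lam0: "lam > 0" and lam2: "lam\<^sup>2 = 2 * K" unfolding lam_def using Kpos by auto
  define c2 where "c2 = exp (- \<alpha> * F xs) * exp (- \<alpha> * cu * (1 + lam))"
  have c20: "c2 > 0" unfolding c2_def by simp
  have pw: "c2 * (1 - norm x ^ 4 / lam\<^sup>2) \<le> exp (- \<alpha> * F x)" for x
  proof (cases "(norm x)\<^sup>2 \<le> lam")
    case True
    have "\<alpha> * (F x - F xs) \<le> \<alpha> * (cu * (1 + lam))"
    proof -
      have "cu * (1 + (norm x)\<^sup>2) \<le> cu * (1 + lam)" using True cu by simp
      then show ?thesis using up \<alpha>pos by (meson mult_left_mono order_trans less_imp_le)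
    qed
    then have "c2 \<le> exp (- \<alpha> * F x)" unfolding c2_def
      by (simp add: exp_add[symmetric] algebra_simps)
    moreover have "c2 * (1 - norm x ^ 4 / lam\<^sup>2) \<le> c2" using c20 lam0 by (simp add: mult_le_cancel_left1)
    ultimately show ?thesis by linarith
  next
    case False
    then have "lam\<^sup>2 < ((norm x)\<^sup>2)\<^sup>2" using lam0 by (intro power_strict_mono) auto
    then have "norm x ^ 4 / lam\<^sup>2 > 1" using lam0 by (simp add: power_mult[symmetric])
    then have "c2 * (1 - norm x ^ 4 / lam\<^sup>2) \<le> 0" using c20 by (simp add: mult_nonneg_nonpos)
    then show ?thesis by (smt (verit) exp_gt_zero)
  qed
  have m4: "(\<lambda>x. norm x ^ 4) \<in> borel_measurable \<mu>" unfolding meq by measurable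
  have i4: "integrable \<mu> (\<lambda>x. norm x ^ 4)"
    by (rule integrableI_nonneg[OF m4]) (use mom in \<open>auto intro: le_less_trans[OF _ ennreal_less_top]\<close>)
  have v4: "(\<integral>x. norm x ^ 4 \<partial>\<mu>) \<le> K"
  proof -
    have "ennreal (\<integral>x. norm x ^ 4 \<partial>\<mu>) = (\<integral>\<^sup>+ x. ennreal (norm x ^ 4) \<partial>\<mu>)"
      by (rule nn_integral_eq_integral[symmetric]) (use i4 in auto)
    then show ?thesis using mom Kpos by (metis ennreal_le_iff less_imp_le)
  qed
  have iw: "integrable \<mu> (\<lambda>x. exp (- \<alpha> * F x))"
    by (rule integrable_const_bound[where B=E]) (use wb wm meq in auto)
  have "(\<integral>x. c2 * (1 - norm x ^ 4 / lam\<^sup>2) \<partial>\<mu>) \<le> (\<integral>x. exp (- \<alpha> * F x) \<partial>\<mu>)"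
    by (rule integral_mono) (use pw iw i4 in auto)
  moreover have "(\<integral>x. c2 * (1 - norm x ^ 4 / lam\<^sup>2) \<partial>\<mu>) = c2 * (1 - (\<integral>x. norm x ^ 4 \<partial>\<mu>) / lam\<^sup>2)"
    using i4 by (simp add: Bochner_Integration.integral_diff prob_space)
  moreover have "c2 * (1 - (\<integral>x. norm x ^ 4 \<partial>\<mu>) / lam\<^sup>2) \<ge> c2 / 2"
  proof -
    have "(\<integral>x. norm x ^ 4 \<partial>\<mu>) / lam\<^sup>2 \<le> 1 / 2" using v4 lam2 Kpos by (simp add: field_simps)
    then have "c2 * (1 / 2) \<le> c2 * (1 - (\<integral>x. norm x ^ 4 \<partial>\<mu>) / lam\<^sup>2)"
      using c20 by (intro mult_left_mono) auto
    then show ?thesis by simp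
  qed
  ultimately show ?thesis unfolding c2_def lam_def by linarith
qed




lemma num_bound:
  fixes g :: "'a::euclidean_space \<Rightarrow> 'b::euclidean_space"
  assumes mu: "\<mu> \<in> prob_measures" and gm: "g \<in> borel_measurable borel" and bd: "\<And>x. norm (g x) \<le> B"
  shows "norm (\<integral>x. g x \<partial>\<mu>) \<le> B"
proof -
  have ps: "prob_space \<mu>" and sets: "sets \<mu> = sets borel" using mu unfolding prob_measures_def by auto
  interpret prob_space \<mu> by fact
  have meq: "borel_measurable \<mu> = borel_measurable borel" using measurable_cong_sets[OF sets refl] .
  have ig: "integrable \<mu> g" by (rule integrable_const_bound[where B=B]) (use bd gm meq in auto)
  have "norm (\<integral>x. g x \<partial>\<mu>) \<le> (\<integral>x. norm (g x) \<partial>\<mu>)" by (rule integral_norm_bound)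
  also have "\<dots> \<le> (\<integral>x. B \<partial>\<mu>)" by (rule integral_mono) (use ig bd in auto)
  also have "\<dots> = B" by (simp add: prob_space)
  finally show ?thesis .
qed

theorem lemma3p3:
  fixes F :: "'a::euclidean_space \<Rightarrow> real"
    and xs :: 'a and LF cu cl Rl :: real
  assumes A1: "bdd_below (range F)"
    and xs_min: "\<forall>y. F xs \<le> F y"
    and pos: "LF > 0" "cu > 0" "cl > 0" "Rl > 0"
    and lip: "\<forall>x y. \<bar>F x - F y\<bar> \<le> LF * (1 + norm x + norm y) * norm (x - y)"
    and up: "\<forall>x. F x - F xs \<le> cu * (1 + (norm x)\<^sup>2)"
    and low: "\<forall>x. norm x > Rl \<longrightarrow> F x - F xs \<ge> cl * (norm x)\<^sup>2"
    and \<alpha>pos: "\<alpha> > 0" and Kpos: "K > 0"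
  shows "\<exists>C0>0. \<forall>\<mu> \<mu>'. \<mu> \<in> prob_measures \<longrightarrow> \<mu>' \<in> prob_measures
            \<longrightarrow> (\<integral>\<^sup>+ x. ennreal (norm x ^ 4) \<partial>\<mu>) \<le> ennreal K
            \<longrightarrow> (\<integral>\<^sup>+ x. ennreal (norm x ^ 4) \<partial>\<mu>') \<le> ennreal K
            \<longrightarrow> ennreal (norm (consensus_point \<alpha> F \<mu> - consensus_point \<alpha> F \<mu>'))
                  \<le> ennreal C0 * W1 \<mu> \<mu>'"
proof -
  define E where "E = exp (- \<alpha> * F xs)"
  define B where "B = E * ((1 + Rl)\<^sup>2 + 2 + 2 / (\<alpha> * cl))"
  define L where "L = E + 2 * \<alpha> * LF * B + 2 * B"
  note wb = weight_bounds[OF xs_min pos(1) pos(3) pos(4) lip low \<alpha>pos, folded E_def, folded B_def, folded L_def]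
  define w where "w x = exp (- \<alpha> * F x)" for x
  define g where "g x = w x *\<^sub>R x" for x
  have wle: "\<And>x. 0 < w x \<and> w x \<le> E" using wb(1) unfolding w_def .
  have wB: "\<And>x. w x * (1 + norm x)\<^sup>2 \<le> B" using wb(2) unfolding w_def .
  have lw: "\<And>x y. norm (w x - w y) \<le> L * dist x y" using wb(3) unfolding w_def real_norm_def .
  have lg: "\<And>x y. norm (g x - g y) \<le> L * dist x y" using wb(4) unfolding w_def g_def .
  have E0: "E > 0" and B0: "B > 0" and L0: "L > 0" using wb(5-7) .
  have wn: "norm (w x) \<le> B" for x
  proof -
    have "1 * 1 \<le> (1 + norm x) * (1 + norm x)" by (intro mult_mono) auto
    then have "1 \<le> (1 + norm x)\<^sup>2" by (simp add: power2_eq_square)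
    then have "w x * 1 \<le> w x * (1 + norm x)\<^sup>2" using wle[of x] by (intro mult_left_mono) auto
    moreover have "norm (w x) = w x" using wle[of x] by simp
    ultimately show ?thesis using wB[of x] by linarith
  qed
  have gn: "norm (g x) \<le> B" for x
  proof -
    have "norm x * 1 \<le> (1 + norm x) * (1 + norm x)" by (intro mult_mono) auto
    then have "norm x \<le> (1 + norm x)\<^sup>2" by (simp add: power2_eq_square)
    then have "w x * norm x \<le> w x * (1 + norm x)\<^sup>2" using wle[of x] by (intro mult_left_mono) auto
    moreover have "norm (g x) = w x * norm x" using wle[of x] unfolding g_def by simp
    ultimately show ?thesis using wB[of x] by linarith
  qed
  have wm: "w \<in> borel_measurable borel" using lw by (rule lip_meas)
  have gm: "g \<in> borel_measurable borel" using lg by (rule lip_meas)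
  define z0 where "z0 = exp (- \<alpha> * F xs) * exp (- \<alpha> * cu * (1 + sqrt (2 * K))) / 2"
  have z00: "z0 > 0" unfolding z0_def by simp
  define C0 where "C0 = L / z0 + L * B / z0\<^sup>2"
  have C00: "C0 > 0" unfolding C0_def using L0 B0 z00 by (intro add_pos_pos) auto
  show ?thesis
  proof (intro exI[of _ C0] conjI allI impI)
    show "C0 > 0" by fact
    fix \<mu> \<mu>' :: "'a measure"
    assume mu: "\<mu> \<in> prob_measures" and mu': "\<mu>' \<in> prob_measures"
      and m1: "(\<integral>\<^sup>+ x. ennreal (norm x ^ 4) \<partial>\<mu>) \<le> ennreal K"
      and m2: "(\<integral>\<^sup>+ x. ennreal (norm x ^ 4) \<partial>\<mu>') \<le> ennreal K"
    define N where "N = (\<integral>x. g x \<partial>\<mu>)"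
    define N' where "N' = (\<integral>x. g x \<partial>\<mu>')"
    define Z where "Z = (\<integral>x. w x \<partial>\<mu>)"
    define Z' where "Z' = (\<integral>x. w x \<partial>\<mu>')"
    have cp: "consensus_point \<alpha> F \<mu> - consensus_point \<alpha> F \<mu>' = N /\<^sub>R Z - N' /\<^sub>R Z'"
      unfolding consensus_point_def weight_def N_def N'_def Z_def Z'_def g_def w_def by simp
    have wm': "(\<lambda>x. exp (- \<alpha> * F x)) \<in> borel_measurable borel" using wm unfolding w_def .
    have wE: "\<And>x. exp (- \<alpha> * F x) \<le> E" using wle unfolding w_def by auto
    have Zb: "Z \<ge> z0" unfolding Z_def z0_def w_def
      by (rule denom_lower[OF mu m1 Kpos \<alpha>pos pos(2) up wm' wE])
    have Zb': "Z' \<ge> z0" unfolding Z'_def z0_def w_def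
      by (rule denom_lower[OF mu' m2 Kpos \<alpha>pos pos(2) up wm' wE])
    have N'b: "norm N' \<le> B" unfolding N'_def by (rule num_bound[OF mu' gm gn])
    have key: "ennreal (norm (N /\<^sub>R Z - N' /\<^sub>R Z') / C0) \<le> (\<integral>\<^sup>+ z. ennreal (dist (fst z) (snd z)) \<partial>\<pi>)"
      if pi: "\<pi> \<in> couplings \<mu> \<mu>'" for \<pi>
    proof -
      define D where "D = (\<integral>\<^sup>+ z. ennreal (dist (fst z) (snd z)) \<partial>\<pi>)"
      have c1: "ennreal (norm (N - N')) \<le> ennreal L * D"
        unfolding N_def N'_def D_def by (rule coupling_bound[OF pi lg gn])
      have c2: "ennreal (norm (Z - Z')) \<le> ennreal L * D"
        unfolding Z_def Z'_def D_def by (rule coupling_bound[OF pi lw wn])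
      show ?thesis
      proof (cases "D = \<top>")
        case True
        then show ?thesis unfolding D_def by simp
      next
        case False
        then obtain d where d: "D = ennreal d" "d \<ge> 0" by (cases D) auto
        have Ld: "ennreal L * D = ennreal (L * d)" using d L0 by (simp add: ennreal_mult)
        have Ld0: "0 \<le> L * d" using d L0 by simp
        have r1: "norm (N - N') \<le> L * d" using c1 Ld Ld0 by (simp add: ennreal_le_iff)
        have r2: "\<bar>Z - Z'\<bar> \<le> L * d" using c2 Ld Ld0 by (simp add: ennreal_le_iff)
        have "norm (N /\<^sub>R Z - N' /\<^sub>R Z') \<le> C0 * d"
          unfolding C0_def by (rule quot_bound[OF Zb Zb' z00 N'b r1 r2])
        then have "norm (N /\<^sub>R Z - N' /\<^sub>R Z') / C0 \<le> d" using C00 by (simp add: field_simps)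
        then show ?thesis using d unfolding D_def[symmetric] by (simp add: ennreal_leI)
      qed
    qed
    have "ennreal (norm (N /\<^sub>R Z - N' /\<^sub>R Z') / C0) \<le> W1 \<mu> \<mu>'"
      unfolding W1_def by (rule INF_greatest) (rule key)
    then have "ennreal C0 * ennreal (norm (N /\<^sub>R Z - N' /\<^sub>R Z') / C0) \<le> ennreal C0 * W1 \<mu> \<mu>'"
      by (rule mult_left_mono) simp
    moreover have "ennreal C0 * ennreal (norm (N /\<^sub>R Z - N' /\<^sub>R Z') / C0) = ennreal (norm (N /\<^sub>R Z - N' /\<^sub>R Z'))"
      using C00 by (simp add: ennreal_mult[symmetric])
    ultimately show "ennreal (norm (consensus_point \<alpha> F \<mu> - consensus_point \<alpha> F \<mu>')) \<le> ennreal C0 * W1 \<mu> \<mu>'"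
      unfolding cp by simp
  qed
qed


end
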